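(* Let $c_0>0$. There is a constant $C>0$ depending only on $c_0$ such that the following holds. Let $N\geq 10$ be an integer and let $\{a_n\}_{n=1}^N$ be a uniformly convex sequence (with parameter $N$) satisfying $|\{a_n\}_{n=1}^N\cap N^{-1}\mathbb{Z}|\geq c_0N^{2/3}$. Define $v_n=(\frac{n}{N}-\frac{a_n}{N},\,a_n)\in\mathbb{R}^2$ for $1\le n\le N$. Then there exists a complex sequence $\{b_n\}_{n=1}^N$ such that \[ \left\| \sup_{x\in [0,N^2]} \left|\sum_{n=1}^N b_n e((x,t)\cdot v_n) \right| \right\|_{L^4([0,N^2])} \geq C N^{\frac56}\Big(\sum_{n=1}^N|b_n|^2\Big)^{1/2}, \] where the $L^4([0,N^2])$ norm is in the variable $t$.
   Context: $e(x):=e^{2\pi i x}$ and $\cdot$ is the Euclidean inner product on $\mathbb{R}^2$. A real sequence $\{a_n\}_{n=1}^N$ is called uniformly convex (with parameter $N$) if for all admissible $n$: $a_{n+1}-a_n\in[\frac{1}{4N},\frac{4}{N}]$ and $(a_{n+2}-a_{n+1})-(a_{n+1}-a_n)\in[\frac{1}{4N^2},\frac{4}{N^2}]$. $|\cdot|$ of a set denotes cardinality. *)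

theory Defs
  imports "HOL-Analysis.Analysis"
begin

definition e :: "real \<Rightarrow> complex" where
  "e x = exp (2 * of_real pi * \<i> * of_real x)"

definition uniformly_convex :: "nat \<Rightarrow> (nat \<Rightarrow> real) \<Rightarrow> bool" where
  "uniformly_convex N a \<longleftrightarrow>
     (\<forall>n. 1 \<le> n \<and> n + 1 \<le> N \<longrightarrow>
        a (n+1) - a n \<in> {1 / (4 * real N) .. 4 / real N}) \<and>
     (\<forall>n. 1 \<le> n \<and> n + 2 \<le> N \<longrightarrow>
        (a (n+2) - a (n+1)) - (a (n+1) - a n) \<in> {1 / (4 * real N ^ 2) .. 4 / real N ^ 2})"

definition vec_v :: "nat \<Rightarrow> (nat \<Rightarrow> real) \<Rightarrow> nat \<Rightarrow> real \<times> real" where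
  "vec_v N a n = (real n / real N - a n / real N, a n)"

end

theory Submission
  imports Defs
begin


lemma e_cis: "e x = cis (2*pi*x)"
  unfolding e_def cis_conv_exp by (simp add: mult_ac)

lemma e_add: "e (x + y) = e x * e y"
  unfolding e_cis by (simp add: cis_mult distrib_left)

lemma e_int: "e (of_int j) = 1"
  unfolding e_cis by simp

lemma norm_e[simp]: "norm (e x) = 1"
  unfolding e_cis by simp

lemma Re_e: "Re (e x) = cos (2*pi*x)"
  unfolding e_cis by simp

lemma spread:
  assumes uc: "uniformly_convex N a" and N: "N \<ge> 1"
  shows "1 \<le> n \<Longrightarrow> n \<le> N \<Longrightarrow> 0 \<le> a n - a 1 \<and> a n - a 1 \<le> 4 * (real n - 1) / real N"
proof (induction n)
  case 0 then show ?case by simp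
next
  case (Suc n)
  show ?case
  proof (cases "n = 0")
    case True then show ?thesis by simp
  next
    case False
    then have n1: "1 \<le> n" "n + 1 \<le> N" using Suc by auto
    then have IH: "0 \<le> a n - a 1 \<and> a n - a 1 \<le> 4 * (real n - 1) / real N" using Suc by auto
    have st: "a (n+1) - a n \<in> {1 / (4 * real N) .. 4 / real N}"
      using uc n1 unfolding uniformly_convex_def by blast
    have st2: "a (n+1) - a n \<le> 4 / real N" using st by simp
    have st0: "1 / (4 * real N) \<le> a (n+1) - a n" using st by simp
    have "0 \<le> 1 / (4 * real N)" by simp
    then have st1: "0 \<le> a (n+1) - a n" using st0 by linarith
    have "4 * (real n - 1) / real N + 4 / real N = 4 * (real (Suc n) - 1) / real N"
      using N by (simp add: field_simps)
    then show ?thesis using IH st1 st2 by simp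
  qed
qed

lemma spread4:
  assumes uc: "uniformly_convex N a" and N: "N \<ge> 1" and n: "1 \<le> n" "n \<le> N"
  shows "\<bar>a n - a 1\<bar> \<le> 4"
proof -
  have h: "0 \<le> a n - a 1 \<and> a n - a 1 \<le> 4 * (real n - 1) / real N" using spread[OF uc N n] .
  have "4 * (real n - 1) / real N \<le> 4"
    using n N by (simp add: divide_le_eq)
  then show ?thesis using h by auto
qed

lemma cos_ge_half: "\<bar>y\<bar> \<le> pi/3 \<Longrightarrow> cos y \<ge> 1/2"
proof -
  assume h: "\<bar>y\<bar> \<le> pi/3"
  have "cos (pi/3) \<le> cos \<bar>y\<bar>"
    by (rule cos_monotone_0_pi_le) (use h in auto)
  then show ?thesis by (simp add: cos_60)
qed


lemma pointwise:
  fixes N m :: nat and s :: real and S :: "nat set"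
  assumes N: "N \<ge> 1" and fin: "finite S"
    and grid: "\<And>n. n \<in> S \<Longrightarrow> \<exists>k::int. a n = of_int k / real N"
    and spr: "\<And>n. n \<in> S \<Longrightarrow> \<bar>a n - a 1\<bar> \<le> 4"
    and s: "0 \<le> s" "s \<le> 1/40"
  shows "norm (\<Sum>n\<in>S. e ((real (N * (m mod N)), real m + s) \<bullet> vec_v N a n)) \<ge> real (card S) / 2"
proof -
  define q where "q = m div N"
  define r where "r = m mod N"
  have mqr: "real m = real N * real q + real r"
    unfolding q_def r_def using of_nat_add[of "N * (m div N)" "m mod N", where 'a=real] of_nat_mult[of N "m div N", where 'a=real] by (simp only: mult_div_mod_eq)
  have ph: "e ((real (N * (m mod N)), real m + s) \<bullet> vec_v N a n) = e (s * (a n - a 1)) * e (s * a 1)"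
    if n: "n \<in> S" for n
  proof -
    obtain k :: int where k: "a n = of_int k / real N" using grid[OF n] by blast
    have "(real (N * (m mod N)), real m + s) \<bullet> vec_v N a n
        = of_int (int r * int n + int q * k) + (s * (a n - a 1) + s * a 1)"
      unfolding vec_v_def inner_Pair inner_real_def k mqr r_def[symmetric]
      using N by (simp add: field_simps)
    then show ?thesis
      by (simp only: e_add e_int mult_1_left)
  qed
  have "(\<Sum>n\<in>S. e ((real (N * (m mod N)), real m + s) \<bullet> vec_v N a n))
      = (\<Sum>n\<in>S. e (s * (a n - a 1))) * e (s * a 1)"
    unfolding sum_distrib_right by (rule sum.cong[OF refl], rule ph)
  then have eq: "norm (\<Sum>n\<in>S. e ((real (N * (m mod N)), real m + s) \<bullet> vec_v N a n))
      = norm (\<Sum>n\<in>S. e (s * (a n - a 1)))"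
    by (simp add: norm_mult)
  have "real (card S) / 2 = (\<Sum>n\<in>S. 1/2)" by simp
  also have "\<dots> \<le> (\<Sum>n\<in>S. Re (e (s * (a n - a 1))))"
  proof (rule sum_mono)
    fix n assume n: "n \<in> S"
    have "abs (2 * pi * (s * (a n - a 1))) = 2 * pi * s * abs (a n - a 1)"
      using s by (simp add: abs_mult)
    also have "\<dots> \<le> 2 * pi * (1/40) * 4"
      using s spr[OF n] pi_gt_zero
      by (intro mult_mono) auto
    also have "\<dots> \<le> pi/3" using pi_gt_zero by simp
    finally show "1/2 \<le> Re (e (s * (a n - a 1)))"
      unfolding Re_e by (rule cos_ge_half)
  qed
  also have "\<dots> = Re (\<Sum>n\<in>S. e (s * (a n - a 1)))" by simp
  also have "\<dots> \<le> norm (\<Sum>n\<in>S. e (s * (a n - a 1)))" by (rule complex_Re_le_cmod)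
  finally show ?thesis using eq by simp
qed



lemma cont_sup:
  fixes F :: "real \<Rightarrow> real \<Rightarrow> real"
  assumes cF: "continuous_on UNIV (\<lambda>p. F (fst p) (snd p))"
    and X: "compact X" "X \<noteq> {}" and T: "compact T"
  shows "continuous_on T (\<lambda>t. Sup ((\<lambda>x. F x t) ` X))"
proof -
  have cXT: "continuous_on (X \<times> T) (\<lambda>p. F (fst p) (snd p))"
    using cF continuous_on_subset by blast
  have uc: "uniformly_continuous_on (X \<times> T) (\<lambda>p. F (fst p) (snd p))"
    using compact_uniformly_continuous[OF cXT] X T compact_Times by blast
  have bdd: "bdd_above ((\<lambda>x. F x t) ` X)" if "t \<in> T" for t
  proof -
    have "continuous_on X (\<lambda>x. F x t)"
      using continuous_on_compose2[OF cF continuous_on_Pair[OF continuous_on_id continuous_on_const, of X t]] by (simp add: subset_UNIV)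
    then have "compact ((\<lambda>x. F x t) ` X)" by (rule compact_continuous_image[OF _ X(1)])
    then show ?thesis by (meson bounded_imp_bdd_above compact_imp_bounded)
  qed
  show ?thesis unfolding continuous_on_iff
  proof (intro ballI allI impI)
    fix t0 and \<epsilon> :: real assume t0: "t0 \<in> T" and e: "0 < \<epsilon>"
    obtain d where d: "d > 0" and dd: "\<And>p p'. p \<in> X \<times> T \<Longrightarrow> p' \<in> X \<times> T \<Longrightarrow> dist p' p < d \<Longrightarrow>
        dist (F (fst p') (snd p')) (F (fst p) (snd p)) < \<epsilon>/2"
      using uc e unfolding uniformly_continuous_on_def by (meson half_gt_zero)
    show "\<exists>d>0. \<forall>t\<in>T. dist t t0 < d \<longrightarrow> dist (Sup ((\<lambda>x. F x t) ` X)) (Sup ((\<lambda>x. F x t0) ` X)) < \<epsilon>"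
    proof (intro exI[of _ d] conjI ballI impI d)
      fix t assume t: "t \<in> T" "dist t t0 < d"
      have close: "\<bar>F x t - F x t0\<bar> < \<epsilon>/2" if "x \<in> X" for x
      proof -
        have "dist (x,t) (x,t0) = dist t t0" by (simp add: dist_Pair_Pair)
        then have "dist (F x t) (F x t0) < \<epsilon>/2"
          using dd[of "(x,t0)" "(x,t)"] that t t0 by auto
        then show ?thesis by (simp add: dist_real_def)
      qed
      have 1: "Sup ((\<lambda>x. F x t) ` X) \<le> Sup ((\<lambda>x. F x t0) ` X) + \<epsilon>/2"
      proof (rule cSUP_least[OF X(2)])
        fix x assume x: "x \<in> X"
        have "F x t0 \<le> Sup ((\<lambda>x. F x t0) ` X)" by (rule cSUP_upper[OF x bdd[OF t0]])
        then show "F x t \<le> Sup ((\<lambda>x. F x t0) ` X) + \<epsilon>/2" using close[OF x] by linarith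
      qed
      have 2: "Sup ((\<lambda>x. F x t0) ` X) \<le> Sup ((\<lambda>x. F x t) ` X) + \<epsilon>/2"
      proof (rule cSUP_least[OF X(2)])
        fix x assume x: "x \<in> X"
        have "F x t \<le> Sup ((\<lambda>x. F x t) ` X)" by (rule cSUP_upper[OF x bdd[OF t(1)]])
        then show "F x t0 \<le> Sup ((\<lambda>x. F x t) ` X) + \<epsilon>/2" using close[OF x] by linarith
      qed
      show "dist (Sup ((\<lambda>x. F x t) ` X)) (Sup ((\<lambda>x. F x t0) ` X)) < \<epsilon>"
        using 1 2 e by (simp add: dist_real_def abs_le_iff)
    qed
  qed
qed



lemma final_arith:
  fixes c0 K I n :: real
  assumes c0: "c0 > 0" and n: "n \<ge> 1" and K: "K \<ge> c0 * n powr (2/3)"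
    and I: "I \<ge> n^2 * (K/2)^4 / 40"
  shows "I powr (1/4) \<ge> (sqrt c0 / 6) * n powr (5/6) * sqrt K"
proof -
  define P where "P = n powr (2/3)"
  have P0: "P > 0" using n by (simp add: P_def)
  have K0: "K \<ge> 0" using K c0 P0 unfolding P_def[symmetric] by (meson mult_pos_pos less_eq_real_def order_trans)
  define B where "B = (sqrt c0 / 6) * n powr (5/6) * sqrt K"
  have B0: "B \<ge> 0" unfolding B_def using c0 K0 by simp
  have n56: "(n powr (5/6))^4 = n^2 * P^2"
  proof -
    have "(n powr (5/6))^4 = n powr (real 4 * (5/6))" using n by (simp add: powr_power)
    also have "\<dots> = n powr 2 * n powr (2/3) * n powr (2/3)"
      by (simp flip: powr_add)
    also have "n powr 2 = n^2" using n by (simp add: powr_realpow[of n 2, simplified])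
    finally show ?thesis by (simp add: P_def power2_eq_square)
  qed
  have B4: "B^4 = c0^2 / 1296 * (n^2 * P^2) * K^2"
  proof -
    have "B^4 = (sqrt c0)^4 / 1296 * (n powr (5/6))^4 * (sqrt K)^4"
      unfolding B_def by (simp add: power_mult_distrib power_divide)
    also have "(sqrt c0)^4 = c0^2" using c0
      by (metis less_eq_real_def numeral_Bit0 power_mult real_sqrt_pow2 mult_2 power2_eq_square)
    also have "(sqrt K)^4 = K^2" using K0
      by (metis numeral_Bit0 power_mult real_sqrt_pow2 mult_2 power2_eq_square)
    finally show ?thesis using n56 by simp
  qed
  have KP: "(c0 * P)^2 \<le> K^2" using K c0 P0 unfolding P_def[symmetric]
    by (intro power_mono) auto
  have "B^4 = (c0 * P)^2 * (n^2 * K^2) / 1296" unfolding B4 by (simp add: power_mult_distrib)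
  also have "\<dots> \<le> K^2 * (n^2 * K^2) / 1296"
    by (intro divide_right_mono mult_right_mono KP) auto
  also have "\<dots> \<le> n^2 * (K/2)^4 / 40"
    by (simp add: power_divide field_simps)
  also have "\<dots> \<le> I" by (rule I)
  finally have BI: "B^4 \<le> I" .
  show ?thesis
  proof (cases "B = 0")
    case True then show ?thesis unfolding B_def[symmetric] by simp
  next
    case False
    then have Bp: "B > 0" using B0 by simp
    have "(B^4) powr (1/4) = (B powr real 4) powr (1/4)" by (simp only: powr_realpow[OF Bp])
    also have "\<dots> = B powr (real 4 * (1/4))" by (simp only: powr_powr)
    also have "\<dots> = B" using Bp by simp
    finally have "B = (B^4) powr (1/4)" by simp
    also have "(B^4) powr (1/4) \<le> I powr (1/4)" using BI by (intro powr_mono2) auto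
    finally show ?thesis unfolding B_def .
  qed
qed

theorem proposition4:
  fixes c0 :: real
  assumes "c0 > 0"
  shows "\<exists>C>0. \<forall>(N::nat) (a::nat \<Rightarrow> real).
     N \<ge> 10 \<longrightarrow> uniformly_convex N a \<longrightarrow>
     real (card ((a ` {1..N}) \<inter> {x. \<exists>k::int. x = of_int k / real N})) \<ge> c0 * real N powr (2/3) \<longrightarrow>
     (\<exists>b::nat \<Rightarrow> complex. (\<exists>n\<in>{1..N}. b n \<noteq> 0) \<and>
        (LINT t:{0..real N ^ 2}|lborel.
            (Sup ((\<lambda>x. norm (\<Sum>n=1..N. b n * e ((x, t) \<bullet> vec_v N a n))) ` {0..real N ^ 2})) ^ 4)
          powr (1/4)
        \<ge> C * real N powr (5/6) * sqrt (\<Sum>n=1..N. (norm (b n))\<^sup>2))"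
proof (intro exI[of _ "sqrt c0 / 6"] conjI allI impI)
  show "sqrt c0 / 6 > 0" using assms by simp
  fix N :: nat and a :: "nat \<Rightarrow> real"
  assume N10: "N \<ge> 10" and uc: "uniformly_convex N a"
    and cardh: "real (card ((a ` {1..N}) \<inter> {x. \<exists>k::int. x = of_int k / real N})) \<ge> c0 * real N powr (2/3)"
  have N1: "N \<ge> 1" using N10 by simp
  define S where "S = {n\<in>{1..N}. \<exists>k::int. a n = of_int k / real N}"
  define b :: "nat \<Rightarrow> complex" where "b n = (if n \<in> S then 1 else 0)" for n
  define K where "K = real (card S)"
  define A where "A = {0..real N ^ 2}"
  define F where "F x t = norm (\<Sum>n=1..N. b n * e ((x, t) \<bullet> vec_v N a n))" for x t
  define g where "g t = Sup ((\<lambda>x. F x t) ` A)" for t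
  have SN: "S \<subseteq> {1..N}" unfolding S_def by auto
  have finS: "finite S" using SN finite_subset by blast
  have "a ` {1..N} \<inter> {x. \<exists>k::int. x = of_int k / real N} = a ` S"
    unfolding S_def by auto
  then have "card ((a ` {1..N}) \<inter> {x. \<exists>k::int. x = of_int k / real N}) \<le> card S"
    using card_image_le[OF finS, of a] by simp
  then have KK: "K \<ge> c0 * real N powr (2/3)" using cardh unfolding K_def by linarith
  have Kpos: "K > 0"
  proof -
    have "real N powr (2/3) > 0" using N1 by simp
    then have "c0 * real N powr (2/3) > 0" using assms by simp
    then show ?thesis using KK by linarith
  qed
  then have "S \<noteq> {}" unfolding K_def by auto
  then obtain n0 where n0: "n0 \<in> S" by blast
  have nz: "\<exists>n\<in>{1..N}. b n \<noteq> 0" using n0 SN unfolding b_def by auto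
  have sumb: "(\<Sum>n=1..N. (norm (b n))\<^sup>2) = K"
  proof -
    have "(\<Sum>n=1..N. (norm (b n))\<^sup>2) = (\<Sum>n\<in>S. 1)"
      by (rule sum.mono_neutral_cong_right) (use SN in \<open>auto simp: b_def\<close>)
    then show ?thesis unfolding K_def by simp
  qed
  have FS: "F x t = norm (\<Sum>n\<in>S. e ((x, t) \<bullet> vec_v N a n))" for x t
  proof -
    have "(\<Sum>n=1..N. b n * e ((x, t) \<bullet> vec_v N a n)) = (\<Sum>n\<in>S. e ((x, t) \<bullet> vec_v N a n))"
      by (rule sum.mono_neutral_cong_right) (use SN in \<open>auto simp: b_def\<close>)
    then show ?thesis unfolding F_def by simp
  qed
  have contF: "continuous_on UNIV (\<lambda>p. F (fst p) (snd p))"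
    unfolding F_def e_def by (intro continuous_intros)
  have bddF: "bdd_above ((\<lambda>x. F x t) ` A)" for t
  proof -
    have "continuous_on A (\<lambda>x. F x t)"
      using continuous_on_compose2[OF contF continuous_on_Pair[OF continuous_on_id continuous_on_const, of A t]] by (simp add: subset_UNIV)
    then have "compact ((\<lambda>x. F x t) ` A)" by (rule compact_continuous_image) (simp add: A_def)
    then show ?thesis by (meson bounded_imp_bdd_above compact_imp_bounded)
  qed
  have gF: "F x t \<le> g t" if "x \<in> A" for x t
    unfolding g_def by (rule cSUP_upper[OF that bddF])
  have g0: "g t \<ge> 0" for t
  proof -
    have "0 \<in> A" unfolding A_def by simp
    then have "F 0 t \<le> g t" by (rule gF)
    moreover have "F 0 t \<ge> 0" unfolding F_def by simp
    ultimately show ?thesis by linarith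
  qed
  have contg: "continuous_on A g"
    unfolding g_def by (rule cont_sup[OF contF]) (auto simp: A_def)
  have intg: "integrable lborel (\<lambda>t. indicator A t *\<^sub>R (g t ^ 4))"
  proof (rule borel_integrable_compact)
    show "compact A" unfolding A_def by simp
    show "continuous_on A (\<lambda>t. g t ^ 4)" using contg by (intro continuous_intros)
  qed
  have spr: "\<bar>a n - a 1\<bar> \<le> 4" if "n \<in> S" for n
    using spread4[OF uc N1] that SN by auto
  have grid: "\<exists>k::int. a n = of_int k / real N" if "n \<in> S" for n
    using that unfolding S_def by auto
  define c where "c = (K/2)^4"
  define I where "I m = {real m .. real m + 1/40}" for m :: nat
  define h where "h t = (\<Sum>m<N^2. c * indicator (I m) t)" for t
  have IA: "I m \<subseteq> A" if "m < N^2" for m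
  proof -
    have "m + 1 \<le> N ^ 2" using that by simp
    then have "real (m + 1) \<le> real (N ^ 2)" by (simp only: of_nat_le_iff)
    then have "real m + 1 \<le> real N ^ 2" by simp
    then show ?thesis unfolding I_def A_def by auto
  qed
  have good: "g t \<ge> K/2" if "m < N^2" "t \<in> I m" for m t
  proof -
    define s where "s = t - real m"
    have s: "0 \<le> s" "s \<le> 1/40" using that(2) unfolding s_def I_def by auto
    have tt: "t = real m + s" unfolding s_def by simp
    have "real (N * (m mod N)) \<le> real (N * N)"
    proof -
    have "m mod N \<le> N" using N1 by (simp add: less_imp_le_nat)
    then have "N * (m mod N) \<le> N * N" by (rule mult_le_mono2)
    then show ?thesis by (simp only: of_nat_le_iff)
  qed
    then have x0: "real (N * (m mod N)) \<in> A" unfolding A_def by (simp add: power2_eq_square)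
    have "K/2 \<le> F (real (N * (m mod N))) t"
      unfolding FS K_def tt by (rule pointwise[where a=a and m=m, OF N1 finS grid spr s])
    also have "\<dots> \<le> g t" by (rule gF[OF x0])
    finally show ?thesis .
  qed
  have hle: "h t \<le> indicator A t *\<^sub>R (g t ^ 4)" for t
  proof (cases "\<exists>m<N^2. t \<in> I m")
    case True
    then obtain m where m: "m < N^2" "t \<in> I m" by blast
    have ind: "indicator (I m') t = (if m' = m then 1 else (0::real))" if "m' < N^2" for m'
    proof (cases "m' = m")
      case True then show ?thesis using m by simp
    next
      case False
      have "t \<notin> I m'"
      proof
        assume "t \<in> I m'"
        then have "\<bar>real m' - real m\<bar> \<le> 1/40" using m(2) unfolding I_def by auto
        moreover have "\<bar>real m' - real m\<bar> \<ge> 1" using False by linarith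
        ultimately show False by simp
      qed
      then show ?thesis using False by simp
    qed
    have "h t = (\<Sum>m'<N^2. if m' = m then c else 0)"
      unfolding h_def by (rule sum.cong) (auto simp: ind)
    also have "\<dots> = c" using m(1) by simp
    finally have "h t = c" .
    moreover have "t \<in> A" using IA[OF m(1)] m(2) by auto
    moreover have "c \<le> g t ^ 4" unfolding c_def using good[OF m] Kpos by (intro power_mono) auto
    ultimately show ?thesis by simp
  next
    case False
    then have "h t = 0" unfolding h_def by (auto intro!: sum.neutral)
    then show ?thesis using g0[of t] by (simp add: indicator_def)
  qed
  have inth: "integrable lborel h"
    unfolding h_def I_def by (rule Bochner_Integration.integrable_sum, rule integrable_mult_right, rule integrable_real_indicator) auto
  have hint: "integral\<^sup>L lborel h = real (N^2) * c / 40"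
  proof -
    have "integral\<^sup>L lborel h = (\<Sum>m<N^2. integral\<^sup>L lborel (\<lambda>t. c * indicator (I m) t))"
      unfolding h_def I_def by (rule Bochner_Integration.integral_sum) auto
    also have "\<dots> = (\<Sum>m<N^2. c / 40)"
      unfolding I_def by (rule sum.cong) (auto simp: measure_lborel_Icc)
    finally show ?thesis by simp
  qed
  have "real (N^2) * c / 40 \<le> (LINT t:A|lborel. g t ^ 4)"
    unfolding set_lebesgue_integral_def hint[symmetric]
    by (rule integral_mono[OF inth intg hle])
  then have Ibound: "(LINT t:A|lborel. g t ^ 4) \<ge> (real N)^2 * (K/2)^4 / 40"
    unfolding c_def by simp
  have "(LINT t:A|lborel. g t ^ 4) powr (1/4) \<ge> (sqrt c0 / 6) * real N powr (5/6) * sqrt K"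
    by (rule final_arith[OF assms _ KK Ibound]) (use N1 in simp)
  then have main: "(LINT t:{0..real N ^ 2}|lborel.
            (Sup ((\<lambda>x. norm (\<Sum>n=1..N. b n * e ((x, t) \<bullet> vec_v N a n))) ` {0..real N ^ 2})) ^ 4)
          powr (1/4)
        \<ge> sqrt c0 / 6 * real N powr (5/6) * sqrt (\<Sum>n=1..N. (norm (b n))\<^sup>2)"
    unfolding sumb g_def F_def A_def .
  show "\<exists>b::nat \<Rightarrow> complex. (\<exists>n\<in>{1..N}. b n \<noteq> 0) \<and>
        (LINT t:{0..real N ^ 2}|lborel.
            (Sup ((\<lambda>x. norm (\<Sum>n=1..N. b n * e ((x, t) \<bullet> vec_v N a n))) ` {0..real N ^ 2})) ^ 4)
          powr (1/4)
        \<ge> sqrt c0 / 6 * real N powr (5/6) * sqrt (\<Sum>n=1..N. (norm (b n))\<^sup>2)"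
    by (rule exI[of _ b]) (use nz main in blast)
qed

end
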